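(* Let $\varepsilon$ be an end of a graph $G$ and $U$ a countable set of vertices of $G$. If there is an uncountable collection $\mathcal{C}$ of internally disjoint $\varepsilon$--$U$ combs in $G$, then $G$ contains a $|\mathcal{C}|$-star of rays, all of whose rays belong to $\varepsilon$, whose leaf rays are the spines of (a subset of) the combs in $\mathcal{C}$.
   Context: A ray is a one-way infinite path; two rays are equivalent if there are infinitely many disjoint paths between them; an end is an equivalence class of rays. An $\varepsilon$--$U$ comb is a subgraph $C=R\cup\bigcup\mathcal{P}$ of $G$ consisting of a ray $R$ (its spine) disjoint from $U$ and belonging to $\varepsilon$, and an infinite family $\mathcal{P}$ of disjoint $R$--$U$ paths; its interior is $C-U$; two such combs are internally disjoint if their interiors are disjoint. A $\kappa$-star of rays consists of pairwise disjoint rays $R$ (centre ray) and $R_i$, $i\in I$, $|I|=\kappa$ (leaf rays), together with a set $\mathcal{P}$ of independent paths (no inner vertex of one lies on another), each meeting the union of these rays exactly in its endvertices and joining $R$ to some $R_i$, such that for each $i$ there are infinitely many disjoint $R_i$--$R$ paths in $\mathcal{P}$. *)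

theory Defs
  imports Main "HOL-Library.Equipollence" "HOL-Library.Countable_Set"
begin

definition graph :: "'a set \<Rightarrow> ('a \<Rightarrow> 'a \<Rightarrow> bool) \<Rightarrow> bool" where
  "graph V E \<longleftrightarrow> (\<forall>x y. E x y \<longrightarrow> x \<in> V \<and> y \<in> V \<and> E y x \<and> x \<noteq> y)"

definition gpath :: "'a set \<Rightarrow> ('a \<Rightarrow> 'a \<Rightarrow> bool) \<Rightarrow> 'a list \<Rightarrow> bool" where
  "gpath V E p \<longleftrightarrow> p \<noteq> [] \<and> distinct p \<and> set p \<subseteq> V \<and>
     (\<forall>i. Suc i < length p \<longrightarrow> E (p ! i) (p ! Suc i))"

definition AB_path :: "'a set \<Rightarrow> ('a \<Rightarrow> 'a \<Rightarrow> bool) \<Rightarrow> 'a set \<Rightarrow> 'a set \<Rightarrow> 'a list \<Rightarrow> bool" where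
  "AB_path V E A B p \<longleftrightarrow> gpath V E p \<and> set p \<inter> A = {hd p} \<and> set p \<inter> B = {last p}"

definition inner_verts :: "'a list \<Rightarrow> 'a set" where
  "inner_verts p = set (butlast (tl p))"

definition ray :: "'a set \<Rightarrow> ('a \<Rightarrow> 'a \<Rightarrow> bool) \<Rightarrow> (nat \<Rightarrow> 'a) \<Rightarrow> bool" where
  "ray V E R \<longleftrightarrow> inj R \<and> range R \<subseteq> V \<and> (\<forall>n. E (R n) (R (Suc n)))"

definition ray_equiv :: "'a set \<Rightarrow> ('a \<Rightarrow> 'a \<Rightarrow> bool) \<Rightarrow> (nat \<Rightarrow> 'a) \<Rightarrow> (nat \<Rightarrow> 'a) \<Rightarrow> bool" where
  "ray_equiv V E R S \<longleftrightarrow> ray V E R \<and> ray V E S \<and>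
     (\<exists>\<P>. infinite \<P> \<and> (\<forall>p\<in>\<P>. AB_path V E (range R) (range S) p) \<and>
          pairwise (\<lambda>p q. disjnt (set p) (set q)) \<P>)"

definition is_end :: "'a set \<Rightarrow> ('a \<Rightarrow> 'a \<Rightarrow> bool) \<Rightarrow> (nat \<Rightarrow> 'a) set \<Rightarrow> bool" where
  "is_end V E \<epsilon> \<longleftrightarrow> (\<exists>R. ray V E R \<and> \<epsilon> = {S. ray_equiv V E R S})"

text \<open>A comb is represented by its spine R and its family of R--U paths (teeth).\<close>

type_synonym 'a comb = "(nat \<Rightarrow> 'a) \<times> 'a list set"

definition is_comb :: "'a set \<Rightarrow> ('a \<Rightarrow> 'a \<Rightarrow> bool) \<Rightarrow> (nat \<Rightarrow> 'a) set \<Rightarrow> 'a set \<Rightarrow> 'a comb \<Rightarrow> bool" where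
  "is_comb V E \<epsilon> U C \<longleftrightarrow>
     ray V E (fst C) \<and> fst C \<in> \<epsilon> \<and> range (fst C) \<inter> U = {} \<and>
     infinite (snd C) \<and> (\<forall>p\<in>snd C. AB_path V E (range (fst C)) U p) \<and>
     pairwise (\<lambda>p q. disjnt (set p) (set q)) (snd C)"

definition comb_verts :: "'a comb \<Rightarrow> 'a set" where
  "comb_verts C = range (fst C) \<union> \<Union> (set ` snd C)"

text \<open>Interior C - U; internally disjoint = interiors (vertex-)disjoint.\<close>

definition comb_interior :: "'a set \<Rightarrow> 'a comb \<Rightarrow> 'a set" where
  "comb_interior U C = comb_verts C - U"

definition ray_star :: "'a set \<Rightarrow> ('a \<Rightarrow> 'a \<Rightarrow> bool) \<Rightarrow> (nat \<Rightarrow> 'a) \<Rightarrow> ('i \<Rightarrow> nat \<Rightarrow> 'a) \<Rightarrow> 'i set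
    \<Rightarrow> 'a list set \<Rightarrow> bool" where
  "ray_star V E R Rs I P \<longleftrightarrow>
     ray V E R \<and> (\<forall>i\<in>I. ray V E (Rs i)) \<and>
     (\<forall>i\<in>I. disjnt (range R) (range (Rs i))) \<and>
     (\<forall>i\<in>I. \<forall>j\<in>I. i \<noteq> j \<longrightarrow> disjnt (range (Rs i)) (range (Rs j))) \<and>
     (\<forall>p\<in>P. gpath V E p \<and>
        set p \<inter> (range R \<union> (\<Union>i\<in>I. range (Rs i))) = {hd p, last p} \<and>
        hd p \<in> range R \<and> (\<exists>i\<in>I. last p \<in> range (Rs i))) \<and>
     (\<forall>p\<in>P. \<forall>q\<in>P. p \<noteq> q \<longrightarrow> inner_verts p \<inter> set q = {}) \<and>
     (\<forall>i\<in>I. \<exists>Q\<subseteq>P. infinite Q \<and> (\<forall>q\<in>Q. last q \<in> range (Rs i)) \<and>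
        pairwise (\<lambda>p q. disjnt (set p) (set q)) Q)"

end

theory Submission
  imports Defs
begin


lemma subsingleton_finite: "(\<And>x y. x \<in> A \<Longrightarrow> y \<in> A \<Longrightarrow> x = y) \<Longrightarrow> finite A"
proof (cases "A = {}")
  case False then obtain a where "a \<in> A" by blast
  moreover assume "\<And>x y. x \<in> A \<Longrightarrow> y \<in> A \<Longrightarrow> x = y"
  ultimately have "A \<subseteq> {a}" by blast
  then show ?thesis by (rule finite_subset) simp
qed simp

lemma finite_hits:
  assumes "\<forall>x\<in>S. \<forall>y\<in>S. x \<noteq> y \<longrightarrow> f x \<inter> f y = {}" "finite F"
  shows "finite {x\<in>S. f x \<inter> F \<noteq> {}}"
proof -
  have "{x\<in>S. f x \<inter> F \<noteq> {}} \<subseteq> (\<Union>v\<in>F. {x\<in>S. v \<in> f x})" by blast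
  moreover have "finite {x\<in>S. v \<in> f x}" for v
    by (rule subsingleton_finite) (use assms(1) in blast)
  ultimately show ?thesis using assms(2) by (meson finite_UN_I finite_subset)
qed

lemma countable_hits:
  assumes "\<forall>x\<in>S. \<forall>y\<in>S. x \<noteq> y \<longrightarrow> f x \<inter> f y = {}" "countable F"
  shows "countable {x\<in>S. f x \<inter> F \<noteq> {}}"
proof -
  have "{x\<in>S. f x \<inter> F \<noteq> {}} \<subseteq> (\<Union>v\<in>F. {x\<in>S. v \<in> f x})" by blast
  moreover have "countable {x\<in>S. v \<in> f x}" for v
    by (rule countable_finite, rule subsingleton_finite) (use assms(1) in blast)
  ultimately show ?thesis using assms(2) by (meson countable_UN countable_subset)
qed

lemma avoid_finite:
  assumes "\<forall>x\<in>S. \<forall>y\<in>S. x \<noteq> y \<longrightarrow> f x \<inter> f y = {}" "finite F" "infinite S"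
  shows "\<exists>x\<in>S. f x \<inter> F = {}"
proof -
  have "infinite (S - {x\<in>S. f x \<inter> F \<noteq> {}})"
    using finite_hits[OF assms(1,2)] assms(3) by (metis Diff_infinite_finite)
  then have "S - {x\<in>S. f x \<inter> F \<noteq> {}} \<noteq> {}" by (metis infinite_imp_nonempty)
  then show ?thesis by blast
qed

lemma uncountable_diff_eqpoll:
  assumes "uncountable A" "countable B"
  shows "A - B \<approx> A"
proof -
  have "infinite (A - B)"
  proof
    assume "finite (A - B)"
    then have "countable (A - B)" by (rule countable_finite)
    then have "countable ((A - B) \<union> B)" using assms(2) countable_Un by blast
    then show False using assms(1) countable_subset[of A "(A - B) \<union> B"] by blast
  qed
  then have "(UNIV::nat set) \<lesssim> A - B" by (simp only: infinite_le_lepoll)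
  then obtain g :: "nat \<Rightarrow> _" where g: "inj g" "range g \<subseteq> A - B"
    unfolding lepoll_def by auto
  define N where "N = range g"
  have Ninf: "infinite N" using g(1) unfolding N_def by (simp add: range_inj_infinite)
  have Nc: "countable N" unfolding N_def by simp
  have "N \<approx> N \<union> (A \<inter> B)"
  proof -
    have c: "countable (N \<union> (A \<inter> B))" using Nc assms(2) by simp
    have i: "infinite (N \<union> (A \<inter> B))" using Ninf by simp
    obtain h1 where "bij_betw h1 N (UNIV::nat set)" using countableE_infinite[OF Nc Ninf] by blast
    moreover obtain h2 where "bij_betw h2 (N \<union> (A \<inter> B)) (UNIV::nat set)"
      using countableE_infinite[OF c i] by blast
    ultimately have "N \<approx> (UNIV::nat set)" "N \<union> (A \<inter> B) \<approx> (UNIV::nat set)"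
      unfolding eqpoll_def by blast+
    then show ?thesis using eqpoll_sym eqpoll_trans by blast
  qed
  moreover have "(A - B - N) \<approx> (A - B - N)" by (rule eqpoll_refl)
  ultimately have "(A - B - N) \<union> N \<approx> (A - B - N) \<union> (N \<union> (A \<inter> B))"
    by (intro Un_eqpoll_cong) (auto simp: disjnt_def N_def dest: subsetD[OF g(2)])
  moreover have "(A - B - N) \<union> N = A - B" using g(2) N_def by blast
  moreover have "(A - B - N) \<union> (N \<union> (A \<inter> B)) = A" using g(2) N_def by blast
  ultimately show ?thesis by simp
qed



fun epath :: "('a \<Rightarrow> 'a \<Rightarrow> bool) \<Rightarrow> 'a list \<Rightarrow> bool" where
  "epath E [] = True"
| "epath E [x] = True"
| "epath E (x # y # xs) = (E x y \<and> epath E (y # xs))"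

fun wlk :: "('a \<Rightarrow> 'a \<Rightarrow> bool) \<Rightarrow> 'a list \<Rightarrow> bool" where
  "wlk E [] = True"
| "wlk E [x] = True"
| "wlk E (x # y # xs) = ((E x y \<or> x = y) \<and> wlk E (y # xs))"

lemma epath_iff_nth: "epath E p \<longleftrightarrow> (\<forall>i. Suc i < length p \<longrightarrow> E (p ! i) (p ! Suc i))"
proof (induction E p rule: epath.induct)
  case (3 E x y xs)
  have "(\<forall>i. Suc i < length (x # y # xs) \<longrightarrow> E ((x # y # xs) ! i) ((x # y # xs) ! Suc i))
      \<longleftrightarrow> E x y \<and> (\<forall>i. Suc i < length (y # xs) \<longrightarrow> E ((y # xs) ! i) ((y # xs) ! Suc i))"
  proof
    assume a: "\<forall>i. Suc i < length (x # y # xs) \<longrightarrow> E ((x # y # xs) ! i) ((x # y # xs) ! Suc i)"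
    have "E x y" using a[rule_format, of 0] by simp
    moreover have "E ((y # xs) ! i) ((y # xs) ! Suc i)" if "Suc i < length (y # xs)" for i
      using a[rule_format, of "Suc i"] that by simp
    ultimately show "E x y \<and> (\<forall>i. Suc i < length (y # xs) \<longrightarrow> E ((y # xs) ! i) ((y # xs) ! Suc i))"
      by blast
  next
    assume a: "E x y \<and> (\<forall>i. Suc i < length (y # xs) \<longrightarrow> E ((y # xs) ! i) ((y # xs) ! Suc i))"
    show "\<forall>i. Suc i < length (x # y # xs) \<longrightarrow> E ((x # y # xs) ! i) ((x # y # xs) ! Suc i)"
    proof (intro allI impI)
      fix i assume i: "Suc i < length (x # y # xs)"
      show "E ((x # y # xs) ! i) ((x # y # xs) ! Suc i)"
      proof (cases i)
        case 0 then show ?thesis using a by simp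
      next
        case (Suc j) then show ?thesis using a i by auto
      qed
    qed
  qed
  then show ?case using 3 by simp
qed auto

lemma gpath_alt: "gpath V E p \<longleftrightarrow> p \<noteq> [] \<and> distinct p \<and> set p \<subseteq> V \<and> epath E p"
  unfolding gpath_def epath_iff_nth by blast

lemma epath_append:
  "epath E (xs @ ys) \<longleftrightarrow> epath E xs \<and> epath E ys \<and> (xs \<noteq> [] \<and> ys \<noteq> [] \<longrightarrow> E (last xs) (hd ys))"
proof (induction xs)
  case (Cons x xs)
  then show ?case by (cases xs; cases ys) auto
qed simp

lemma wlk_append:
  "wlk E (xs @ ys) \<longleftrightarrow> wlk E xs \<and> wlk E ys \<and> (xs \<noteq> [] \<and> ys \<noteq> [] \<longrightarrow> E (last xs) (hd ys) \<or> last xs = hd ys)"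
proof (induction xs)
  case (Cons x xs)
  then show ?case by (cases xs; cases ys) auto
qed simp

lemma epath_wlk: "epath E p \<Longrightarrow> wlk E p"
  by (induction E p rule: epath.induct) auto

lemma wlk_Cons: "wlk E (x # xs) \<Longrightarrow> wlk E xs"
  by (cases xs) auto

lemma epath_Cons: "epath E (x # xs) \<Longrightarrow> epath E xs"
  by (cases xs) auto

lemma wlk_rev: assumes "\<And>x y. E x y \<Longrightarrow> E y x" shows "wlk E p \<Longrightarrow> wlk E (rev p)"
proof (induction p)
  case (Cons x xs)
  have "wlk E (rev xs)" using Cons.IH[OF wlk_Cons[OF Cons.prems]] .
  moreover have "xs \<noteq> [] \<Longrightarrow> E (hd xs) x \<or> hd xs = x"
    using Cons.prems assms by (cases xs) auto
  ultimately show ?case by (auto simp: wlk_append last_rev)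
qed simp

lemma epath_rev: assumes "\<And>x y. E x y \<Longrightarrow> E y x" shows "epath E p \<Longrightarrow> epath E (rev p)"
proof (induction p)
  case (Cons x xs)
  have "epath E (rev xs)" using Cons.IH[OF epath_Cons[OF Cons.prems]] .
  moreover have "xs \<noteq> [] \<Longrightarrow> E (hd xs) x"
    using Cons.prems assms by (cases xs) auto
  ultimately show ?case by (auto simp: epath_append last_rev)
qed simp

lemma gpath_rev: assumes "\<And>x y. E x y \<Longrightarrow> E y x" shows "gpath V E p \<Longrightarrow> gpath V E (rev p)"
  using epath_rev[OF assms] by (auto simp: gpath_alt)

lemma gpath_join:
  assumes "gpath V E xs" "gpath V E ys" "last xs = hd ys" "set xs \<inter> set (tl ys) = {}"
  shows "gpath V E (xs @ tl ys)"
proof (cases "tl ys = []")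
  case True then show ?thesis using assms by simp
next
  case False
  then obtain y z zs where ys: "ys = y # z # zs" using assms(2) unfolding gpath_alt
    by (metis list.exhaust_sel)
  have "E y z" using assms(2) ys by (simp add: gpath_alt)
  then show ?thesis using assms ys unfolding gpath_alt by (auto simp: epath_append)
qed

lemma walk_to_path:
  "wlk E w \<Longrightarrow> w \<noteq> [] \<Longrightarrow> set w \<subseteq> V \<Longrightarrow>
   \<exists>p. gpath V E p \<and> hd p = hd w \<and> last p = last w \<and> set p \<subseteq> set w"
proof (induction w)
  case Nil then show ?case by simp
next
  case (Cons x w)
  show ?case
  proof (cases "w = []")
    case True
    then show ?thesis using Cons.prems by (intro exI[of _ "[x]"]) (simp add: gpath_alt)
  next
    case False
    then obtain p where p: "gpath V E p" "hd p = hd w" "last p = last w" "set p \<subseteq> set w"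
      using Cons wlk_Cons by (metis insert_subset list.simps(15))
    show ?thesis
    proof (cases "x \<in> set p")
      case True
      then obtain ys zs where yz: "p = ys @ x # zs" by (meson split_list)
      have "gpath V E (x # zs)" using p(1) unfolding yz gpath_alt by (auto simp: epath_append)
      moreover have "last (x # zs) = last (x # w)"
        using p(3) False yz by (cases zs) auto
      ultimately show ?thesis using p(4) yz by (intro exI[of _ "x # zs"]) auto
    next
      case xn: False
      have pne: "p \<noteq> []" using p(1) by (simp add: gpath_alt)
      have "x \<noteq> hd w" using xn p(2) pne by (metis list.set_sel(1))
      then have "E x (hd w)" using Cons.prems(1) False by (cases w) auto
      then have "gpath V E (x # p)" using p(1) xn pne Cons.prems(3) p(2)
        unfolding gpath_alt by (cases p) auto
      then show ?thesis using p False pne by (intro exI[of _ "x # p"]) auto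
    qed
  qed
qed

definition seg :: "(nat \<Rightarrow> 'a) \<Rightarrow> nat \<Rightarrow> nat \<Rightarrow> 'a list" where
  "seg f a b = (if a \<le> b then map f [a..<Suc b] else rev (map f [b..<Suc a]))"

lemma epath_map_upt: "(\<And>n. E (f n) (f (Suc n))) \<Longrightarrow> epath E (map f [a..<b])"
  unfolding epath_iff_nth by (auto simp: add.commute)

lemma seg_props:
  assumes "\<And>n. E (f n) (f (Suc n))" "\<And>x y. E x y \<Longrightarrow> E y x"
  shows "wlk E (seg f a b)" "seg f a b \<noteq> []" "hd (seg f a b) = f a" "last (seg f a b) = f b"
    "set (seg f a b) \<subseteq> range f"
proof -
  have e1: "epath E (map f [c..<d])" for c d using epath_map_upt[of E f, OF assms(1)] by blast
  have "epath E (seg f a b)"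
    unfolding seg_def using e1 epath_rev[OF assms(2) e1] by presburger
  then show "wlk E (seg f a b)" by (rule epath_wlk)
  show "seg f a b \<noteq> []" unfolding seg_def by auto
  show "hd (seg f a b) = f a"
  proof (cases "a \<le> b")
    case True
    then have "[a..<Suc b] = a # [Suc a..<Suc b]" by (simp add: upt_conv_Cons)
    then show ?thesis using True unfolding seg_def by simp
  next
    case False
    then show ?thesis unfolding seg_def by (simp add: hd_rev last_map)
  qed
  show "last (seg f a b) = f b" unfolding seg_def by (auto simp: hd_map last_rev last_map)
  show "set (seg f a b) \<subseteq> range f" unfolding seg_def by auto
qed



lemma AB_pathD:
  assumes "AB_path V E A B p"
  shows "gpath V E p" "hd p \<in> A" "last p \<in> B" "set p \<inter> A = {hd p}" "set p \<inter> B = {last p}"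
  using assms unfolding AB_path_def by auto

lemma wlk_join: "wlk E xs \<Longrightarrow> wlk E ys \<Longrightarrow> last xs = hd ys \<Longrightarrow> wlk E (xs @ ys)"
  by (simp add: wlk_append)

lemma gpath_wlk: "gpath V E p \<Longrightarrow> wlk E p"
  by (simp add: gpath_alt epath_wlk)

locale L =
  fixes V :: "'a set" and E :: "'a \<Rightarrow> 'a \<Rightarrow> bool"
    and \<epsilon> :: "(nat \<Rightarrow> 'a) set" and U :: "'a set" and \<C> :: "'a comb set" and R0 :: "nat \<Rightarrow> 'a"
  assumes G: "graph V E"
    and UV: "U \<subseteq> V" and cU: "countable U"
    and unc: "uncountable \<C>"
    and combs: "\<forall>C\<in>\<C>. is_comb V E \<epsilon> U C"
    and disj: "\<forall>C\<in>\<C>. \<forall>D\<in>\<C>. C \<noteq> D \<longrightarrow> comb_interior U C \<inter> comb_interior U D = {}"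
    and R0: "ray V E R0"
    and eps: "\<epsilon> = {S. ray_equiv V E R0 S}"
begin

lemma sym: "E x y \<Longrightarrow> E y x"
  using G unfolding graph_def by blast

lemma R0_inj: "inj R0" and R0_V: "R0 n \<in> V" and R0_E: "E (R0 n) (R0 (Suc n))"
  using R0 unfolding ray_def by auto

lemma comb_ray: "C \<in> \<C> \<Longrightarrow> ray V E (fst C)"
  and comb_eps: "C \<in> \<C> \<Longrightarrow> ray_equiv V E R0 (fst C)"
  and comb_inf: "C \<in> \<C> \<Longrightarrow> infinite (snd C)"
  and comb_tooth: "C \<in> \<C> \<Longrightarrow> t \<in> snd C \<Longrightarrow> AB_path V E (range (fst C)) U t"
  and comb_tdisj: "C \<in> \<C> \<Longrightarrow> t \<in> snd C \<Longrightarrow> t' \<in> snd C \<Longrightarrow> t \<noteq> t' \<Longrightarrow> set t \<inter> set t' = {}"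
  and comb_spU: "C \<in> \<C> \<Longrightarrow> range (fst C) \<inter> U = {}"
  using combs eps unfolding is_comb_def pairwise_def disjnt_def by auto

lemma spine_int: "C \<in> \<C> \<Longrightarrow> range (fst C) \<subseteq> comb_interior U C"
  using comb_spU unfolding comb_interior_def comb_verts_def by blast

lemma tooth_int: "C \<in> \<C> \<Longrightarrow> t \<in> snd C \<Longrightarrow> set t - {last t} \<subseteq> comb_interior U C"
proof -
  assume a: "C \<in> \<C>" "t \<in> snd C"
  have "set t \<inter> U = {last t}" using AB_pathD(5)[OF comb_tooth[OF a]] .
  moreover have "set t \<subseteq> comb_verts C" using a unfolding comb_verts_def by blast
  ultimately show ?thesis unfolding comb_interior_def by blast
qed

lemma tooth_U: "C \<in> \<C> \<Longrightarrow> t \<in> snd C \<Longrightarrow> set t \<inter> U = {last t}"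
  using AB_pathD(5)[OF comb_tooth] by blast

lemma int_disj: "\<forall>C\<in>A. \<forall>D\<in>A. C \<noteq> D \<longrightarrow> comb_interior U C \<inter> comb_interior U D = {}"
  if "A \<subseteq> \<C>" using disj that by blast

definition S :: "'a \<Rightarrow> 'a comb set" where "S u = {C\<in>\<C>. \<exists>t\<in>snd C. last t = u}"
definition H :: "'a set" where "H = {u\<in>U. uncountable (S u)}"

definition light :: "'a comb set" where "light = {C\<in>\<C>. \<exists>t\<in>snd C. last t \<notin> H}"

lemma light_countable: "countable light"
proof -
  have "light \<subseteq> (\<Union>u\<in>U - H. S u)"
  proof
    fix C assume "C \<in> light"
    then obtain t where t: "C \<in> \<C>" "t \<in> snd C" "last t \<notin> H" unfolding light_def by blast
    have "last t \<in> U" using AB_pathD(3)[OF comb_tooth[OF t(1,2)]] .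
    then show "C \<in> (\<Union>u\<in>U - H. S u)" using t unfolding S_def by blast
  qed
  moreover have "countable (\<Union>u\<in>U - H. S u)"
    by (rule countable_UN) (use cU in \<open>auto simp: H_def\<close>)
  ultimately show ?thesis using countable_subset by blast
qed

lemma H_sub: "H \<subseteq> U" unfolding H_def by blast

lemma H_countable: "countable H" using H_sub cU countable_subset by blast

lemma H_infinite: "infinite H"
proof -
  have "\<C> - light \<noteq> {}"
  proof
    assume "\<C> - light = {}"
    then have "\<C> \<subseteq> light" by blast
    then show False using light_countable unc countable_subset by blast
  qed
  then obtain C where C: "C \<in> \<C>" "C \<notin> light" by blast
  have "last ` snd C \<subseteq> H" using C unfolding light_def by blast
  moreover have "inj_on last (snd C)"
  proof (rule inj_onI)
    fix t t' assume a: "t \<in> snd C" "t' \<in> snd C" "last t = last t'"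
    have "t \<noteq> [] " "t' \<noteq> []" using AB_pathD(1)[OF comb_tooth[OF C(1)]] a by (auto simp: gpath_def)
    then have "last t \<in> set t \<inter> set t'" using a(3) by (metis last_in_set IntI)
    then show "t = t'" using comb_tdisj[OF C(1) a(1,2)] by blast
  qed
  ultimately show ?thesis using comb_inf[OF C(1)] finite_subset finite_imageD by metis
qed

lemma pick_comb:
  assumes "h \<in> H" "finite F"
  shows "\<exists>C\<in>\<C>. \<exists>t\<in>snd C. last t = h \<and> comb_interior U C \<inter> F = {}"
proof -
  have "infinite (S h)" using assms(1) unfolding H_def using countable_finite by blast
  moreover have "S h \<subseteq> \<C>" unfolding S_def by blast
  ultimately obtain C where "C \<in> S h" "comb_interior U C \<inter> F = {}"
    using avoid_finite[OF int_disj assms(2)] by blast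
  then show ?thesis unfolding S_def by blast
qed

lemma pick_path:
  assumes "ray_equiv V E R0 Sp" "finite F"
  shows "\<exists>p. AB_path V E (range R0) (range Sp) p \<and> set p \<inter> F = {}"
proof -
  obtain P where P: "infinite P" "\<forall>p\<in>P. AB_path V E (range R0) (range Sp) p"
    "pairwise (\<lambda>p q. disjnt (set p) (set q)) P"
    using assms(1) unfolding ray_equiv_def by blast
  have "\<forall>x\<in>P. \<forall>y\<in>P. x \<noteq> y \<longrightarrow> set x \<inter> set y = {}"
    using P(3) unfolding pairwise_def disjnt_def by blast
  then obtain p where "p \<in> P" "set p \<inter> F = {}" using avoid_finite[OF _ assms(2) P(1)] by blast
  then show ?thesis using P(2) by blast
qed

lemma pick_path_far:
  assumes "ray_equiv V E R0 Sp" "finite F"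
  shows "\<exists>p j. AB_path V E (range R0) (range Sp) p \<and> set p \<inter> F = {} \<and> hd p = R0 j \<and> K < j"
proof -
  obtain p where p: "AB_path V E (range R0) (range Sp) p" "set p \<inter> (F \<union> R0 ` {..K}) = {}"
    using pick_path[OF assms(1), of "F \<union> R0 ` {..K}"] assms(2) by blast
  obtain j where j: "hd p = R0 j" using AB_pathD(2)[OF p(1)] by blast
  have "hd p \<in> set p" using AB_pathD(1)[OF p(1)] by (simp add: gpath_def)
  then have "K < j" using p(2) j by (metis IntI atMost_iff empty_iff image_eqI not_le_imp_less UnCI)
  then show ?thesis using p j by blast
qed

end


lemma tl_sub: "set (tl p) \<subseteq> set p" by (cases p) auto

lemma tl_distinct_hd: "distinct p \<Longrightarrow> x \<in> set (tl p) \<Longrightarrow> x \<noteq> hd p"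
  by (cases p) auto

lemma last_tl: "tl p \<noteq> [] \<Longrightarrow> last (tl p) = last p"
  by (cases p) auto

lemma last_in_tl: "tl p \<noteq> [] \<Longrightarrow> last p \<in> set (tl p)"
  by (metis last_in_set last_tl)

lemma upt_hd: "i \<le> j \<Longrightarrow> hd (map f [i..<Suc j]) = f i"
  by (subst upt_conv_Cons) auto

context L begin

definition inv :: "'a list \<Rightarrow> nat \<Rightarrow> bool" where
  "inv W i \<longleftrightarrow> gpath V E W \<and> last W = R0 i \<and> (\<forall>k. R0 k \<in> set W \<longrightarrow> k \<le> i)"

lemma rseg:
  assumes "i \<le> j"
  shows "wlk E (map R0 [i..<Suc j])" "map R0 [i..<Suc j] \<noteq> []" "hd (map R0 [i..<Suc j]) = R0 i"
    "last (map R0 [i..<Suc j]) = R0 j" "set (map R0 [i..<Suc j]) = R0 ` {i..j}"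
    "set (map R0 [i..<Suc j]) \<subseteq> V"
proof -
  show "wlk E (map R0 [i..<Suc j])" using epath_map_upt[of E R0, OF R0_E] epath_wlk by blast
  show "map R0 [i..<Suc j] \<noteq> []" using assms by simp
  show "hd (map R0 [i..<Suc j]) = R0 i" using upt_hd[OF assms] .
  show "last (map R0 [i..<Suc j]) = R0 j" using assms by (simp add: last_map)
  show "set (map R0 [i..<Suc j]) = R0 ` {i..j}" by auto
  then show "set (map R0 [i..<Suc j]) \<subseteq> V" using R0_V by auto
qed

lemma spine_seg:
  assumes "C \<in> \<C>"
  shows "wlk E (seg (fst C) a b)" "seg (fst C) a b \<noteq> []" "hd (seg (fst C) a b) = fst C a"
    "last (seg (fst C) a b) = fst C b" "set (seg (fst C) a b) \<subseteq> comb_interior U C"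
    "set (seg (fst C) a b) \<subseteq> V"
proof -
  have r: "ray V E (fst C)" using comb_ray[OF assms] .
  have e: "\<And>n. E (fst C n) (fst C (Suc n))" using r unfolding ray_def by blast
  show "wlk E (seg (fst C) a b)" "seg (fst C) a b \<noteq> []" "hd (seg (fst C) a b) = fst C a"
    "last (seg (fst C) a b) = fst C b" using seg_props[of E "fst C", OF e sym] by auto
  show "set (seg (fst C) a b) \<subseteq> comb_interior U C"
    using seg_props(5)[of E "fst C", OF e sym] spine_int[OF assms] by blast
  show "set (seg (fst C) a b) \<subseteq> V"
    using seg_props(5)[of E "fst C", OF e sym] r unfolding ray_def by blast
qed

lemma step:
  assumes "inv W i" "h \<in> H" "h \<notin> set W"
  shows "\<exists>ys i'. inv (W @ ys) i' \<and> i < i' \<and> h \<in> set ys"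
proof -
  have W: "gpath V E W" "last W = R0 i" "\<And>k. R0 k \<in> set W \<Longrightarrow> k \<le> i"
    using assms(1) unfolding inv_def by auto
  have Wne: "W \<noteq> []" using W(1) unfolding gpath_def by auto
  have iW: "R0 i \<in> set W" using W(2) Wne last_in_set by metis
  obtain C t where C: "C \<in> \<C>" "t \<in> snd C" "last t = h" "comb_interior U C \<inter> set W = {}"
    using pick_comb[OF assms(2), of "set W"] by blast
  obtain b j where b: "AB_path V E (range R0) (range (fst C)) b" "set b \<inter> set W = {}"
    "hd b = R0 j" "i < j"
    using pick_path_far[OF comb_eps[OF C(1)], of "set W" i] by blast
  have bg: "gpath V E b" using AB_pathD(1)[OF b(1)] .
  obtain s where s: "last b = fst C s" using AB_pathD(3)[OF b(1)] by blast
  have tA: "AB_path V E (range (fst C)) U t" using comb_tooth[OF C(1,2)] .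
  have tg: "gpath V E t" using AB_pathD(1)[OF tA] .
  obtain s' where s': "hd t = fst C s'" using AB_pathD(2)[OF tA] by blast
  note sg = spine_seg[OF C(1), of s s']
  have ij: "i \<le> j" using b(4) by simp
  note rs = rseg[OF ij]
  define w1 where "w1 = map R0 [i..<Suc j] @ b @ seg (fst C) s s' @ t"
  have bne: "b \<noteq> []" and tne: "t \<noteq> []" using bg tg unfolding gpath_def by auto
  have bV: "set b \<subseteq> V" and tV: "set t \<subseteq> V" using bg tg unfolding gpath_def by auto
  have w1w: "wlk E w1"
  proof -
    have a: "wlk E (seg (fst C) s s' @ t)"
      by (rule wlk_join[OF sg(1) gpath_wlk[OF tg]]) (simp add: sg(4) s')
    have c: "wlk E (b @ seg (fst C) s s' @ t)"
      by (rule wlk_join[OF gpath_wlk[OF bg] a]) (simp add: s sg(2) sg(3))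
    show ?thesis unfolding w1_def
      by (rule wlk_join[OF rs(1) c]) (simp add: rs(4) b(3) bne ij del: upt_Suc)
  qed
  have w1hd: "hd w1 = R0 i" unfolding w1_def using rs(2,3) by (simp del: upt_Suc)
  have w1last: "last w1 = h" unfolding w1_def using tne C(3) by simp
  have w1V: "set w1 \<subseteq> V" unfolding w1_def using rs(6) bV sg(6) tV by (simp del: upt_Suc)
  have A1: "x \<notin> set W" if "x \<in> set w1" "x \<noteq> R0 i" for x
  proof -
    have "x \<in> set (map R0 [i..<Suc j]) \<or> x \<in> set b \<or> x \<in> set (seg (fst C) s s') \<or> x \<in> set t"
      using that(1) unfolding w1_def by auto
    then show ?thesis
    proof (elim disjE)
      assume "x \<in> set (map R0 [i..<Suc j])"
      then obtain k where "x = R0 k" "i \<le> k" by auto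
      then show ?thesis using W(3) that(2) by (metis le_antisym)
    next
      assume "x \<in> set b" then show ?thesis using b(2) by blast
    next
      assume "x \<in> set (seg (fst C) s s')" then show ?thesis using sg(5) C(4) by blast
    next
      assume xt: "x \<in> set t"
      show ?thesis
      proof (cases "x = h")
        case True then show ?thesis using assms(3) by simp
      next
        case False then show ?thesis using xt tooth_int[OF C(1,2)] C(3,4) by blast
      qed
    qed
  qed
  have w1ne: "w1 \<noteq> []" unfolding w1_def using bne by (simp del: upt_Suc)
  obtain p1 where p1: "gpath V E p1" "hd p1 = hd w1" "last p1 = last w1" "set p1 \<subseteq> set w1"
    using walk_to_path[OF w1w w1ne w1V] by blast
  have p1d: "distinct p1" using p1(1) unfolding gpath_def by blast
  have tl1: "set (tl p1) \<inter> set W = {}"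
  proof -
    { fix x assume x: "x \<in> set (tl p1)"
      then have "x \<noteq> R0 i" using tl_distinct_hd[OF p1d x] p1(2) w1hd by simp
      moreover have "x \<in> set w1" using subsetD[OF p1(4) subsetD[OF tl_sub x]] .
      ultimately have "x \<notin> set W" using A1 by blast }
    then show ?thesis by blast
  qed
  have tl1ne: "tl p1 \<noteq> []"
  proof
    assume "tl p1 = []"
    then have "p1 = [hd p1]" using p1(1) unfolding gpath_def by (metis list.collapse)
    then have "h = R0 i" using p1(2,3) w1hd w1last by (metis last.simps)
    then show False using iW assms(3) by simp
  qed
  define W1 where "W1 = W @ tl p1"
  have j1: "last W = hd p1" using W(2) p1(2) w1hd by simp
  have j2: "set W \<inter> set (tl p1) = {}" using tl1 by blast
  have W1g: "gpath V E W1" unfolding W1_def using gpath_join[OF W(1) p1(1) j1 j2] .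
  have W1last: "last W1 = h" unfolding W1_def using tl1ne last_tl[OF tl1ne] p1(3) w1last by simp
  have htl1: "h \<in> set (tl p1)" using last_in_tl[OF tl1ne] p1(3) w1last by simp
  obtain D t2 where D: "D \<in> \<C>" "t2 \<in> snd D" "last t2 = h" "comb_interior U D \<inter> set W1 = {}"
    using pick_comb[OF assms(2), of "set W1"] by blast
  have finK: "finite (R0 -` set W1)" by (rule finite_vimageI) (auto simp: R0_inj)
  define K where "K = Max (R0 -` set W1)"
  have K: "k \<le> K" if "R0 k \<in> set W1" for k
    unfolding K_def using finK that by (simp add: Max_ge)
  obtain a0 k where a0: "AB_path V E (range R0) (range (fst D)) a0" "set a0 \<inter> set W1 = {}"
    "hd a0 = R0 k" "K < k"
    using pick_path_far[OF comb_eps[OF D(1)], of "set W1" K] by blast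
  have a0g: "gpath V E a0" using AB_pathD(1)[OF a0(1)] .
  obtain s2 where s2: "last a0 = fst D s2" using AB_pathD(3)[OF a0(1)] by blast
  have t2A: "AB_path V E (range (fst D)) U t2" using comb_tooth[OF D(1,2)] .
  have t2g: "gpath V E t2" using AB_pathD(1)[OF t2A] .
  obtain s2' where s2': "hd t2 = fst D s2'" using AB_pathD(2)[OF t2A] by blast
  note sg2 = spine_seg[OF D(1), of s2' s2]
  have a0ne: "a0 \<noteq> []" and t2ne: "t2 \<noteq> []" using a0g t2g unfolding gpath_def by auto
  have a0V: "set a0 \<subseteq> V" and t2V: "set t2 \<subseteq> V" using a0g t2g unfolding gpath_def by auto
  define Lw where "Lw = rev t2 @ seg (fst D) s2' s2 @ rev a0"
  have Lw: "wlk E Lw"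
  proof -
    have ra: "wlk E (rev a0)" using gpath_wlk[OF gpath_rev[OF sym a0g]] .
    have rt: "wlk E (rev t2)" using gpath_wlk[OF gpath_rev[OF sym t2g]] .
    have c: "wlk E (seg (fst D) s2' s2 @ rev a0)"
      by (rule wlk_join[OF sg2(1) ra]) (simp add: sg2(4) s2 hd_rev)
    show ?thesis unfolding Lw_def
      by (rule wlk_join[OF rt c]) (simp add: last_rev sg2(2) sg2(3) s2')
  qed
  have Lwhd: "hd Lw = h" unfolding Lw_def using t2ne D(3) by (simp add: hd_rev)
  have Lwlast: "last Lw = R0 k" unfolding Lw_def using a0ne a0(3) by (simp add: last_rev)
  have finM: "finite (R0 -` set Lw)" by (rule finite_vimageI) (auto simp: R0_inj)
  define M where "M = Max (R0 -` set Lw)"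
  have M: "m \<le> M" if "R0 m \<in> set Lw" for m
    unfolding M_def using finM that by (simp add: Max_ge)
  have Lwne: "Lw \<noteq> []" unfolding Lw_def using t2ne by simp
  have kM: "k \<le> M" using M[of k] Lwlast last_in_set[OF Lwne] by simp
  note rs2 = rseg[OF kM]
  define w2 where "w2 = Lw @ map R0 [k..<Suc M]"
  have w2w: "wlk E w2" unfolding w2_def by (rule wlk_join[OF Lw rs2(1)]) (simp add: Lwlast rs2(3) del: upt_Suc)
  have w2hd: "hd w2 = h" unfolding w2_def using Lwhd Lwne by simp
  have w2last: "last w2 = R0 M" unfolding w2_def using rs2(2,4) by (simp del: upt_Suc)
  have w2V: "set w2 \<subseteq> V" unfolding w2_def Lw_def using rs2(6) sg2(6) a0V t2V by (simp del: upt_Suc)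
  have A2: "x \<notin> set W1" if "x \<in> set w2" "x \<noteq> h" for x
  proof -
    have "x \<in> set t2 \<or> x \<in> set (seg (fst D) s2' s2) \<or> x \<in> set a0 \<or> x \<in> set (map R0 [k..<Suc M])"
      using that(1) unfolding w2_def Lw_def by auto
    then show ?thesis
    proof (elim disjE)
      assume "x \<in> set t2" then show ?thesis using that(2) tooth_int[OF D(1,2)] D(3,4) by blast
    next
      assume "x \<in> set (seg (fst D) s2' s2)" then show ?thesis using sg2(5) D(4) by blast
    next
      assume "x \<in> set a0" then show ?thesis using a0(2) by blast
    next
      assume "x \<in> set (map R0 [k..<Suc M])"
      then obtain m where "x = R0 m" "k \<le> m" by auto
      then show ?thesis using K a0(4) by fastforce
    qed
  qed
  have Midx: "m \<le> M" if "R0 m \<in> set w2" for m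
    using that M unfolding w2_def by (auto dest: injD[OF R0_inj])
  have w2ne: "w2 \<noteq> []" unfolding w2_def using Lwne by (simp del: upt_Suc)
  obtain p2 where p2: "gpath V E p2" "hd p2 = hd w2" "last p2 = last w2" "set p2 \<subseteq> set w2"
    using walk_to_path[OF w2w w2ne w2V] by blast
  have p2d: "distinct p2" using p2(1) unfolding gpath_def by blast
  have tl2: "set W1 \<inter> set (tl p2) = {}"
  proof -
    { fix x assume x: "x \<in> set (tl p2)"
      then have "x \<noteq> h" using tl_distinct_hd[OF p2d x] p2(2) w2hd by simp
      moreover have "x \<in> set w2" using subsetD[OF p2(4) subsetD[OF tl_sub x]] .
      ultimately have "x \<notin> set W1" using A2 by blast }
    then show ?thesis by blast
  qed
  have hW1: "h \<in> set W1" unfolding W1_def using htl1 by simp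
  have hM: "h \<noteq> R0 M"
  proof
    assume "h = R0 M"
    then have "M \<le> K" using K hW1 by simp
    then show False using a0(4) kM by simp
  qed
  have tl2ne: "tl p2 \<noteq> []"
  proof
    assume "tl p2 = []"
    then have "p2 = [hd p2]" using p2(1) unfolding gpath_def by (metis list.collapse)
    then have "h = R0 M" using p2(2,3) w2hd w2last by (metis last.simps)
    then show False using hM by simp
  qed
  define W2 where "W2 = W1 @ tl p2"
  have j3: "last W1 = hd p2" using W1last p2(2) w2hd by simp
  have W2g: "gpath V E W2" unfolding W2_def using gpath_join[OF W1g p2(1) j3 tl2] .
  have W2last: "last W2 = R0 M" unfolding W2_def using tl2ne last_tl[OF tl2ne] p2(3) w2last by simp
  have W2idx: "m \<le> M" if "R0 m \<in> set W2" for m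
  proof -
    have "R0 m \<in> set W1 \<or> R0 m \<in> set (tl p2)" using that unfolding W2_def by auto
    then have "R0 m \<in> set W1 \<or> R0 m \<in> set w2" using subsetD[OF p2(4) subsetD[OF tl_sub]] by blast
    then show ?thesis
    proof
      assume "R0 m \<in> set W1" then have "m \<le> K" by (rule K)
      then show ?thesis using a0(4) kM by simp
    qed (rule Midx)
  qed
  have "inv W2 M" unfolding inv_def using W2g W2last W2idx by blast
  moreover have "i < M" using K[of i] iW a0(4) kM unfolding W1_def by fastforce
  moreover have "W2 = W @ (tl p1 @ tl p2)" unfolding W2_def W1_def by simp
  moreover have "h \<in> set (tl p1 @ tl p2)" using htl1 by simp
  ultimately show ?thesis by blast
qed

end


context L begin

definition enum :: "nat \<Rightarrow> 'a" where "enum = from_nat_into H"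

lemma enum_range: "range enum = H"
  unfolding enum_def using range_from_nat_into H_countable H_infinite by (metis infinite_imp_nonempty)

definition lu :: "'a list \<Rightarrow> nat" where "lu W = (LEAST n. enum n \<notin> set W)"

lemma lu_ex: "\<exists>n. enum n \<notin> set W"
proof -
  have "infinite (H - set W)" using H_infinite by (simp add: Diff_infinite_finite)
  then obtain h where "h \<in> H" "h \<notin> set W" by (metis infinite_imp_nonempty Diff_iff ex_in_conv)
  then show ?thesis using enum_range by (metis rangeE)
qed

lemma lu1: "enum (lu W) \<notin> set W"
  unfolding lu_def using LeastI_ex[OF lu_ex] .

lemma lu2: "n < lu W \<Longrightarrow> enum n \<in> set W"
  unfolding lu_def using not_less_Least by blast

definition Q :: "'a list \<Rightarrow> nat \<Rightarrow> 'a list \<Rightarrow> nat \<Rightarrow> bool" where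
  "Q W i W' i' \<longleftrightarrow> inv W' i' \<and> i < i' \<and> (\<exists>ys. W' = W @ ys) \<and> enum (lu W) \<in> set W'"

lemma step': "inv W i \<Longrightarrow> \<exists>q. Q W i (fst q) (snd q)"
proof -
  assume a: "inv W i"
  have "enum (lu W) \<in> H" using enum_range by blast
  then obtain ys i' where "inv (W @ ys) i'" "i < i'" "enum (lu W) \<in> set ys"
    using step[OF a _ lu1] by blast
  then have "Q W i (W @ ys) i'" unfolding Q_def by auto
  then show ?thesis by (intro exI[of _ "(W @ ys, i')"]) simp
qed

definition nxt :: "'a list \<times> nat \<Rightarrow> 'a list \<times> nat" where
  "nxt p = (SOME q. Q (fst p) (snd p) (fst q) (snd q))"

lemma nxt: "inv W i \<Longrightarrow> Q W i (fst (nxt (W, i))) (snd (nxt (W, i)))"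
  unfolding nxt_def using someI_ex[OF step'] by simp

definition sq :: "nat \<Rightarrow> 'a list \<times> nat" where "sq n = (nxt ^^ n) ([R0 0], 0)"
definition Ws :: "nat \<Rightarrow> 'a list" where "Ws n = fst (sq n)"
definition Is :: "nat \<Rightarrow> nat" where "Is n = snd (sq n)"

lemma sq_Suc: "sq (Suc n) = nxt (Ws n, Is n)"
  unfolding sq_def Ws_def Is_def by simp

lemma inv0: "inv [R0 0] 0"
  unfolding inv_def gpath_def using R0_V by (auto dest: injD[OF R0_inj])

lemma sq_inv: "inv (Ws n) (Is n)"
proof (induction n)
  case 0 then show ?case using inv0 unfolding Ws_def Is_def sq_def by simp
next
  case (Suc n)
  have "Q (Ws n) (Is n) (Ws (Suc n)) (Is (Suc n))"
    using nxt[OF Suc.IH] unfolding Ws_def[of "Suc n"] Is_def[of "Suc n"] sq_Suc .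
  then show ?case unfolding Q_def by blast
qed

lemma sq_Q: "Q (Ws n) (Is n) (Ws (Suc n)) (Is (Suc n))"
  using nxt[OF sq_inv[of n]] unfolding Ws_def[of "Suc n"] Is_def[of "Suc n"] sq_Suc .

lemma Is_mono: "strict_mono Is"
  unfolding strict_mono_Suc_iff using sq_Q unfolding Q_def by blast

lemma Ws_prefix: "m \<le> n \<Longrightarrow> \<exists>ys. Ws n = Ws m @ ys"
proof (induction n rule: dec_induct)
  case base then show ?case by simp
next
  case (step n)
  then obtain ys where "Ws n = Ws m @ ys" by blast
  moreover obtain zs where "Ws (Suc n) = Ws n @ zs" using sq_Q[of n] unfolding Q_def by blast
  ultimately show ?case by simp
qed

lemma Ws_sub: "m \<le> n \<Longrightarrow> set (Ws m) \<subseteq> set (Ws n)"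
  using Ws_prefix by fastforce

lemma Ws_len: "n < length (Ws n)"
proof (induction n)
  case 0 then show ?case unfolding Ws_def sq_def by simp
next
  case (Suc n)
  obtain zs where zs: "Ws (Suc n) = Ws n @ zs" using sq_Q[of n] unfolding Q_def by blast
  have "zs \<noteq> []" using zs sq_Q[of n] lu1[of "Ws n"] unfolding Q_def by auto
  then have "length zs \<ge> 1" by (cases zs) auto
  moreover have "length (Ws (Suc n)) = length (Ws n) + length zs" using zs by simp
  ultimately show ?case using Suc.IH by linarith
qed

lemma lu_ge: "n \<le> lu (Ws n)"
proof (induction n)
  case (Suc n)
  have "lu (Ws n) < lu (Ws (Suc n))"
  proof (rule ccontr)
    assume "\<not> ?thesis"
    then have le: "lu (Ws (Suc n)) \<le> lu (Ws n)" by simp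
    have "enum (lu (Ws (Suc n))) \<in> set (Ws (Suc n))"
    proof (cases "lu (Ws (Suc n)) < lu (Ws n)")
      case True
      then show ?thesis using lu2 Ws_sub[of n "Suc n"] by auto
    next
      case False
      then have "lu (Ws (Suc n)) = lu (Ws n)" using le by simp
      then show ?thesis using sq_Q[of n] unfolding Q_def by simp
    qed
    then show False using lu1 by blast
  qed
  then show ?case using Suc.IH by simp
qed simp

definition R :: "nat \<Rightarrow> 'a" where "R m = Ws (Suc m) ! m"

lemma Rnth: "m < length (Ws n) \<Longrightarrow> Ws n ! m = R m"
proof -
  assume m: "m < length (Ws n)"
  show ?thesis
  proof (cases "n \<le> Suc m")
    case True
    then obtain ys where "Ws (Suc m) = Ws n @ ys" using Ws_prefix by blast
    then show ?thesis unfolding R_def using m by (simp add: nth_append)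
  next
    case False
    then obtain ys where "Ws n = Ws (Suc m) @ ys" using Ws_prefix by fastforce
    moreover have "m < length (Ws (Suc m))" using Ws_len[of "Suc m"] by simp
    ultimately show ?thesis unfolding R_def by (simp add: nth_append)
  qed
qed

lemma set_Ws: "set (Ws n) \<subseteq> range R"
proof
  fix x assume "x \<in> set (Ws n)"
  then obtain m where "m < length (Ws n)" "x = Ws n ! m" by (metis in_set_conv_nth)
  then show "x \<in> range R" using Rnth by simp
qed

lemma Ws_g: "gpath V E (Ws n)" using sq_inv[of n] unfolding inv_def by blast

lemma R_ray: "ray V E R"
  unfolding ray_def
proof (intro conjI allI)
  show "inj R"
  proof (rule injI)
    fix a b assume ab: "R a = R b"
    define n where "n = Suc (a + b)"
    have "a < length (Ws n)" "b < length (Ws n)" using Ws_len[of n] unfolding n_def by auto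
    moreover have "distinct (Ws n)" using Ws_g[of n] unfolding gpath_def by blast
    ultimately show "a = b" using ab Rnth by (metis nth_eq_iff_index_eq)
  qed
  show "range R \<subseteq> V"
  proof
    fix x assume "x \<in> range R"
    then obtain m where "x = R m" by blast
    then have "x \<in> set (Ws (Suc m))" unfolding R_def using Ws_len[of "Suc m"] by simp
    then show "x \<in> V" using Ws_g[of "Suc m"] unfolding gpath_def by blast
  qed
  fix m
  define n where "n = Suc (Suc m)"
  have l: "Suc m < length (Ws n)" using Ws_len[of n] unfolding n_def by simp
  then have "E (Ws n ! m) (Ws n ! Suc m)" using Ws_g[of n] unfolding gpath_def by blast
  then show "E (R m) (R (Suc m))" using Rnth l by simp
qed

lemma H_R: "H \<subseteq> range R"
proof
  fix h assume "h \<in> H"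
  then obtain n where n: "h = enum n" using enum_range by blast
  have "n < lu (Ws (Suc n))" using lu_ge[of "Suc n"] by simp
  then have "h \<in> set (Ws (Suc n))" using lu2 n by blast
  then show "h \<in> range R" using set_Ws by blast
qed

lemma R0_R: "R0 (Is n) \<in> range R"
proof -
  have "last (Ws n) = R0 (Is n)" "Ws n \<noteq> []" using sq_inv[of n] unfolding inv_def gpath_def by auto
  then have "R0 (Is n) \<in> set (Ws n)" by (metis last_in_set)
  then show ?thesis using set_Ws by blast
qed

lemma R_eps: "R \<in> \<epsilon>"
proof -
  define P where "P = range (\<lambda>n. [R0 (Is n)])"
  have "inj (\<lambda>n. [R0 (Is n)])"
  proof (rule injI)
    fix x y assume "[R0 (Is x)] = [R0 (Is y)]"
    then have "Is x = Is y" using injD[OF R0_inj] by simp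
    then show "x = y" using strict_mono_eq[OF Is_mono] by simp
  qed
  then have "infinite P" unfolding P_def by (rule range_inj_infinite)
  moreover have "\<forall>p\<in>P. AB_path V E (range R0) (range R) p"
    unfolding P_def AB_path_def gpath_def using R0_V R0_R by auto
  moreover have "pairwise (\<lambda>p q. disjnt (set p) (set q)) P"
    unfolding P_def pairwise_def disjnt_def by auto
  ultimately show ?thesis unfolding eps ray_equiv_def using R0 R_ray by blast
qed

end


lemma inner_props:
  assumes "distinct xs" "x \<in> set (butlast (tl xs))"
  shows "x \<in> set xs" "x \<noteq> hd xs" "x \<noteq> last xs"
proof -
  obtain a ys where xs: "xs = a # ys" using assms(2) by (cases xs) auto
  have "ys \<noteq> []" using assms(2) xs by auto
  then obtain zs b where ys: "ys = zs @ [b]" by (metis rev_exhaust)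
  have x: "x \<in> set zs" using assms(2) xs ys by simp
  show "x \<in> set xs" using x xs ys by simp
  show "x \<noteq> hd xs" using x xs ys assms(1) by auto
  show "x \<noteq> last xs" using x xs ys assms(1) by auto
qed

context L begin

definition I :: "'a comb set" where
  "I = \<C> - (light \<union> {C\<in>\<C>. comb_interior U C \<inter> range R \<noteq> {}})"

lemma I_sub: "I \<subseteq> \<C>" unfolding I_def by blast

lemma I_eqpoll: "I \<approx> \<C>"
proof -
  have "countable {C\<in>\<C>. comb_interior U C \<inter> range R \<noteq> {}}"
    by (rule countable_hits[OF int_disj]) auto
  then have "countable (light \<union> {C\<in>\<C>. comb_interior U C \<inter> range R \<noteq> {}})"
    using light_countable by simp
  then show ?thesis unfolding I_def using uncountable_diff_eqpoll[OF unc] by blast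
qed

lemma I_props:
  assumes "C \<in> I"
  shows "C \<in> \<C>" "comb_interior U C \<inter> range R = {}" "\<And>t. t \<in> snd C \<Longrightarrow> last t \<in> range R"
proof -
  show c: "C \<in> \<C>" using assms I_sub by blast
  show "comb_interior U C \<inter> range R = {}" using assms unfolding I_def by blast
  fix t assume "t \<in> snd C"
  then have "last t \<in> H" using assms c unfolding I_def light_def by blast
  then show "last t \<in> range R" using H_R by blast
qed

definition P :: "'a list set" where "P = (\<Union>C\<in>I. rev ` snd C)"

lemma star: "ray_star V E R fst I P"
  unfolding ray_star_def
proof (intro conjI ballI impI)
  show "ray V E R" by (rule R_ray)
next
  fix C assume "C \<in> I"
  then show "ray V E (fst C)" using comb_ray I_props by blast
next
  fix C assume CI: "C \<in> I"
  have a: "range (fst C) \<subseteq> comb_interior U C" using spine_int[OF I_props(1)[OF CI]] .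
  have b: "comb_interior U C \<inter> range R = {}" using I_props(2)[OF CI] .
  show "disjnt (range R) (range (fst C))"
    unfolding disjnt_def using a b by blast
next
  fix C D assume CD: "C \<in> I" "D \<in> I" "C \<noteq> D"
  have a: "range (fst C) \<subseteq> comb_interior U C" using spine_int[OF I_props(1)[OF CD(1)]] .
  have b: "range (fst D) \<subseteq> comb_interior U D" using spine_int[OF I_props(1)[OF CD(2)]] .
  have c: "comb_interior U C \<inter> comb_interior U D = {}"
    using disj I_props(1)[OF CD(1)] I_props(1)[OF CD(2)] CD(3) by blast
  show "disjnt (range (fst C)) (range (fst D))"
    unfolding disjnt_def using a b c by blast
next
  fix p assume "p \<in> P"
  then obtain C t where Ct: "C \<in> I" "t \<in> snd C" "p = rev t" unfolding P_def by blast
  have C: "C \<in> \<C>" using I_props(1)[OF Ct(1)] .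
  have tA: "AB_path V E (range (fst C)) U t" using comb_tooth[OF C Ct(2)] .
  have tg: "gpath V E t" using AB_pathD(1)[OF tA] .
  have tne: "t \<noteq> []" using tg unfolding gpath_def by blast
  have hdp: "hd p = last t" using Ct(3) tne by (simp add: hd_rev)
  have lastp: "last p = hd t" using Ct(3) tne by (simp add: last_rev)
  show "gpath V E p" using gpath_rev[OF sym tg] Ct(3) by simp
  have lR: "last t \<in> range R" using I_props(3)[OF Ct(1,2)] .
  have hC: "hd t \<in> range (fst C)" using AB_pathD(2)[OF tA] .
  show "hd p \<in> range R" using hdp lR by simp
  show "\<exists>i\<in>I. last p \<in> range (fst i)"
    by (rule bexI[of _ C]) (simp_all only: lastp hC Ct(1))
  show "set p \<inter> (range R \<union> (\<Union>i\<in>I. range (fst i))) = {hd p, last p}"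
  proof
    show "{hd p, last p} \<subseteq> set p \<inter> (range R \<union> (\<Union>i\<in>I. range (fst i)))"
      using hdp lastp lR hC Ct tne by auto
  next
    show "set p \<inter> (range R \<union> (\<Union>i\<in>I. range (fst i))) \<subseteq> {hd p, last p}"
    proof
      fix x assume x: "x \<in> set p \<inter> (range R \<union> (\<Union>i\<in>I. range (fst i)))"
      show "x \<in> {hd p, last p}"
      proof (cases "x = last t")
        case True then show ?thesis using hdp by simp
      next
        case False
        have xt: "x \<in> set t" using x Ct(3) by simp
        then have xi: "x \<in> comb_interior U C" using tooth_int[OF C Ct(2)] False by blast
        have "x \<notin> range R" using xi I_props(2)[OF Ct(1)] by blast
        then obtain D where D: "D \<in> I" "x \<in> range (fst D)" using x by blast
        show ?thesis
        proof (cases "D = C")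
          case True
          then have "x \<in> set t \<inter> range (fst C)" using xt D by blast
          then have "x = hd t" using AB_pathD(4)[OF tA] by blast
          then show ?thesis using lastp by simp
        next
          case False
          have "x \<in> comb_interior U D" using D spine_int I_props(1) by blast
          then show ?thesis using xi disj False D(1) C I_props(1) by blast
        qed
      qed
    qed
  qed
next
  fix p q assume pq: "p \<in> P" "q \<in> P" "p \<noteq> q"
  obtain C t where Ct: "C \<in> I" "t \<in> snd C" "p = rev t" using pq(1) unfolding P_def by blast
  obtain C' t' where Ct': "C' \<in> I" "t' \<in> snd C'" "q = rev t'" using pq(2) unfolding P_def by blast
  have C: "C \<in> \<C>" using I_props(1)[OF Ct(1)] .
  have C': "C' \<in> \<C>" using I_props(1)[OF Ct'(1)] .
  have tg: "gpath V E t" using AB_pathD(1)[OF comb_tooth[OF C Ct(2)]] .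
  have tne: "t \<noteq> []" and td: "distinct t" using tg unfolding gpath_def by auto
  show "inner_verts p \<inter> set q = {}"
  proof (rule ccontr)
    assume "inner_verts p \<inter> set q \<noteq> {}"
    then obtain x where x: "x \<in> set (butlast (tl (rev t)))" "x \<in> set t'"
      unfolding inner_verts_def using Ct(3) Ct'(3) by auto
    have dr: "distinct (rev t)" using td by simp
    have xt: "x \<in> set t" and xl: "x \<noteq> last t"
      using inner_props[OF dr x(1)] tne by (auto simp: hd_rev)
    have xi: "x \<in> comb_interior U C" using tooth_int[OF C Ct(2)] xt xl by blast
    have xU: "x \<notin> U" using tooth_U[OF C Ct(2)] xt xl by blast
    have tt: "t \<noteq> t'" using pq(3) Ct(3) Ct'(3) by blast
    show False
    proof (cases "C = C'")
      case True
      then show False using comb_tdisj[OF C Ct(2)] Ct'(2) tt xt x(2) by blast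
    next
      case False
      have "x \<noteq> last t'" using xU AB_pathD(3)[OF comb_tooth[OF C' Ct'(2)]] by blast
      then have "x \<in> comb_interior U C'" using tooth_int[OF C' Ct'(2)] x(2) by blast
      then show False using xi disj C C' False by blast
    qed
  qed
next
  fix C assume CI: "C \<in> I"
  have C: "C \<in> \<C>" using I_props(1)[OF CI] .
  show "\<exists>Q\<subseteq>P. infinite Q \<and> (\<forall>q\<in>Q. last q \<in> range (fst C)) \<and>
        pairwise (\<lambda>p q. disjnt (set p) (set q)) Q"
  proof (intro exI[of _ "rev ` snd C"] conjI)
    show "rev ` snd C \<subseteq> P" unfolding P_def using CI by blast
    have "inj_on rev (snd C)" by (rule inj_onI) simp
    then show "infinite (rev ` snd C)" using comb_inf[OF C] finite_imageD[of rev "snd C"] by blast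
    show "\<forall>q\<in>rev ` snd C. last q \<in> range (fst C)"
    proof
      fix q assume "q \<in> rev ` snd C"
      then obtain t where t: "t \<in> snd C" "q = rev t" by blast
      have tA: "AB_path V E (range (fst C)) U t" using comb_tooth[OF C t(1)] .
      have "t \<noteq> []" using AB_pathD(1)[OF tA] unfolding gpath_def by blast
      then show "last q \<in> range (fst C)" using AB_pathD(2)[OF tA] t(2) by (simp add: last_rev)
    qed
    show "pairwise (\<lambda>p q. disjnt (set p) (set q)) (rev ` snd C)"
      unfolding pairwise_def disjnt_def using comb_tdisj[OF C] by auto
  qed
qed

end

theorem lemma2p1:
  fixes V :: "'a set" and E :: "'a \<Rightarrow> 'a \<Rightarrow> bool"
    and \<epsilon> :: "(nat \<Rightarrow> 'a) set" and U :: "'a set" and \<C> :: "'a comb set"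
  assumes "graph V E"
    and "is_end V E \<epsilon>"
    and "U \<subseteq> V" and "countable U"
    and "uncountable \<C>"
    and "\<forall>C\<in>\<C>. is_comb V E \<epsilon> U C"
    and "\<forall>C\<in>\<C>. \<forall>D\<in>\<C>. C \<noteq> D \<longrightarrow> comb_interior U C \<inter> comb_interior U D = {}"
  shows "\<exists>R I P. I \<subseteq> \<C> \<and> I \<approx> \<C> \<and> ray_star V E R fst I P \<and>
           R \<in> \<epsilon> \<and> (\<forall>i\<in>I. fst i \<in> \<epsilon>)"
proof -
  obtain R0 where R0: "ray V E R0" "\<epsilon> = {S. ray_equiv V E R0 S}"
    using assms(2) unfolding is_end_def by blast
  interpret L V E \<epsilon> U \<C> R0
    using assms R0 by unfold_locales auto
  have "\<forall>i\<in>I. fst i \<in> \<epsilon>" using I_sub assms(6) unfolding is_comb_def by blast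
  then show ?thesis using I_sub I_eqpoll star R_eps by blast
qed


end
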